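(* Let $C$ be a smooth convex plane curve with no two parallel tangent lines, with its associated domain $D$ and area distance $f:D\to\mathbb{R}$ (defined in the context), and let $C(r)$ be a regular parameterization of $C$. For $p\in D$ denote by $C(u(p))$ and $C(v(p))$ the two extremities of the minimal chord $l(p)$, and regard $u$ and $v$ as (differentiable) functions of $p$. Then $$\nabla u=-\frac{2\,R\,C'(v)}{[C'(u),C'(v)]},\qquad \nabla v=\frac{2\,R\,C'(u)}{[C'(u),C'(v)]}.$$
   Context: $C$ may have $2$, $1$ or $0$ endpoints. $D$ is the plane region bounded by $C$ and by the image(s) of $C$ under the homothety of ratio $1/2$ centred at each endpoint of $C$. A chord is a line segment joining two points of $C$. For $p\in D$, each chord $l$ through $p$ bounds, together with $C$, a region $D_l$; $l(p)$ denotes the chord through $p$ for which the area of $D_{l}$ is minimal, and the area distance is $f(p)=\tfrac12\,\mathrm{area}(D_{l(p)})$. It is known that every $p\in D$ is the midpoint of $l(p)$, i.e. $2p=C(u(p))+C(v(p))$. Notation: for plane vectors $X,Y$, $[X,Y]$ is the determinant of the $2\times2$ matrix with columns $X,Y$; $R$ is the counterclockwise rotation by ninety degrees, so $[X,Y]=-X^tRY$. *)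

theory Defs
  imports "HOL-Analysis.Analysis"
begin

definition det2 :: "real^2 \<Rightarrow> real^2 \<Rightarrow> real" where
  "det2 X Y = X$1 * Y$2 - X$2 * Y$1"

text \<open>R: counterclockwise rotation by ninety degrees.\<close>
definition rot90 :: "real^2 \<Rightarrow> real^2" where
  "rot90 X = vector [- X$2, X$1]"

end

theory Submission
  imports Defs
begin

theorem mainTheorem1:
  fixes C dC :: "real \<Rightarrow> real^2" and I :: "real set"
    and K D :: "(real^2) set" and u v :: "real^2 \<Rightarrow> real" and p :: "real^2"
  assumes I_int: "is_interval I" and I_nontriv: "interior I \<noteq> {}"
    and C_deriv: "\<And>r. r \<in> I \<Longrightarrow> (C has_vector_derivative dC r) (at r within I)"
    and dC_cont: "continuous_on I dC"
    and regular: "\<And>r. r \<in> I \<Longrightarrow> dC r \<noteq> 0"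
    and C_inj: "inj_on C I"
    and convex_curve: "convex K" "closed K" "interior K \<noteq> {}" "C ` I \<subseteq> frontier K"
    and no_parallel: "\<And>r s. r \<in> I \<Longrightarrow> s \<in> I \<Longrightarrow> r \<noteq> s \<Longrightarrow> det2 (dC r) (dC s) \<noteq> 0"
    and uv_in: "\<And>q. q \<in> D \<Longrightarrow> u q \<in> I \<and> v q \<in> I \<and> u q \<noteq> v q"
    and midpoint: "\<And>q. q \<in> D \<Longrightarrow> 2 *\<^sub>R q = C (u q) + C (v q)"
    and p_in: "p \<in> interior D"
    and u_diff: "u differentiable (at p)" and v_diff: "v differentiable (at p)"
  shows "(u has_derivative (\<lambda>h. (- (2 / det2 (dC (u p)) (dC (v p)))) *\<^sub>R rot90 (dC (v p)) \<bullet> h)) (at p)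
       \<and> (v has_derivative (\<lambda>h. (2 / det2 (dC (u p)) (dC (v p))) *\<^sub>R rot90 (dC (u p)) \<bullet> h)) (at p)"
proof -
  obtain u' where du: "(u has_derivative u') (at p)" using u_diff unfolding differentiable_def by blast
  obtain v' where dv: "(v has_derivative v') (at p)" using v_diff unfolding differentiable_def by blast
  obtain e where e: "e > 0" "ball p e \<subseteq> D" using p_in by (meson mem_interior)
  have pD: "p \<in> D" using e by auto
  define a where "a = dC (u p)"
  define b where "b = dC (v p)"
  have uI: "u p \<in> I" and vI: "v p \<in> I" and uv: "u p \<noteq> v p" using uv_in[OF pD] by auto
  have detnz: "det2 a b \<noteq> 0" using no_parallel[OF uI vI uv] by (simp add: a_def b_def)
  have sub_u: "u ` ball p e \<subseteq> I" using e uv_in by auto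
  have sub_v: "v ` ball p e \<subseteq> I" using e uv_in by auto
  have Cu: "(C has_derivative (\<lambda>x. x *\<^sub>R a)) (at (u p) within u ` ball p e)"
    using C_deriv[OF uI] sub_u unfolding has_vector_derivative_def a_def
    by (rule has_derivative_subset)
  have Cv: "(C has_derivative (\<lambda>x. x *\<^sub>R b)) (at (v p) within v ` ball p e)"
    using C_deriv[OF vI] sub_v unfolding has_vector_derivative_def b_def
    by (rule has_derivative_subset)
  have d1: "((C \<circ> u) has_derivative ((\<lambda>x. x *\<^sub>R a) \<circ> u')) (at p within ball p e)"
    by (rule diff_chain_within[OF has_derivative_subset[OF du] Cu]) auto
  have d2: "((C \<circ> v) has_derivative ((\<lambda>x. x *\<^sub>R b) \<circ> v')) (at p within ball p e)"
    by (rule diff_chain_within[OF has_derivative_subset[OF dv] Cv]) auto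
  have atw: "at p within ball p e = at p" by (rule at_within_open) (use e in auto)
  have d3: "((\<lambda>q. (C \<circ> u) q + (C \<circ> v) q) has_derivative (\<lambda>h. u' h *\<^sub>R a + v' h *\<^sub>R b)) (at p)"
    using has_derivative_add[OF d1 d2] unfolding atw o_def .
  have d4: "((\<lambda>q. 2 *\<^sub>R q) has_derivative (\<lambda>h. u' h *\<^sub>R a + v' h *\<^sub>R b)) (at p)"
    by (rule has_derivative_transform_within_open[OF d3, of "ball p e"]) (use e midpoint in auto)
  have d5: "((\<lambda>q. 2 *\<^sub>R q) has_derivative (\<lambda>h. 2 *\<^sub>R h)) (at p)"
    by (intro derivative_eq_intros) auto
  have eq: "\<And>h. u' h *\<^sub>R a + v' h *\<^sub>R b = 2 *\<^sub>R h"
    using has_derivative_unique[OF d4 d5] by metis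
  have solve: "u' h = (- (2 / det2 a b)) *\<^sub>R rot90 b \<bullet> h \<and> v' h = (2 / det2 a b) *\<^sub>R rot90 a \<bullet> h" for h
  proof -
    have e1: "u' h * a$1 + v' h * b$1 = 2 * h$1" and e2: "u' h * a$2 + v' h * b$2 = 2 * h$2"
      using arg_cong[OF eq[of h], of "\<lambda>x. x$1"] arg_cong[OF eq[of h], of "\<lambda>x. x$2"] by auto
    have dd: "a$1 * b$2 - a$2 * b$1 \<noteq> 0" using detnz by (simp add: det2_def)
    have "(u' h * a$1 + v' h * b$1) * b$2 - (u' h * a$2 + v' h * b$2) * b$1 = 2 * h$1 * b$2 - 2 * h$2 * b$1"
      using e1 e2 by simp
    hence U: "u' h * (a$1 * b$2 - a$2 * b$1) = 2 * (h$1 * b$2 - h$2 * b$1)"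
      by (simp add: algebra_simps)
    have "(u' h * a$2 + v' h * b$2) * a$1 - (u' h * a$1 + v' h * b$1) * a$2 = 2 * h$2 * a$1 - 2 * h$1 * a$2"
      using e1 e2 by simp
    hence V: "v' h * (a$1 * b$2 - a$2 * b$1) = 2 * (a$1 * h$2 - a$2 * h$1)"
      by (simp add: algebra_simps)
    have U': "u' h = 2 * (h$1 * b$2 - h$2 * b$1) / (a$1 * b$2 - a$2 * b$1)"
      using U dd by (simp add: eq_divide_eq)
    have V': "v' h = 2 * (a$1 * h$2 - a$2 * h$1) / (a$1 * b$2 - a$2 * b$1)"
      using V dd by (simp add: eq_divide_eq)
    show ?thesis unfolding U' V'
      by (simp add: det2_def rot90_def inner_vec_def sum_2 algebra_simps diff_divide_distrib add_divide_distrib)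
  qed
  have "u' = (\<lambda>h. (- (2 / det2 a b)) *\<^sub>R rot90 b \<bullet> h)" using solve by auto
  moreover have "v' = (\<lambda>h. (2 / det2 a b) *\<^sub>R rot90 a \<bullet> h)" using solve by auto
  ultimately show ?thesis using du dv by (simp add: a_def b_def)
qed

end
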